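(* Let $n,r,s,t\in\mathbb N$, let $G_{n,r,s,t}=(V,E,c)$ be the graph described in the context, and let $F\subseteq E$ be functional. Then: (i) Let $i\in[n]$ and $j\in[rs]$. If $b^1_{i,j}\notin F$, $b^1_{i,j'}\in F$ for all $j'>j$, $i\ge reset(F)$, and $B$ is a tree with $B\subseteq\mathcal B_F$, then $b^1_{i,j}$ is an improving switch with respect to $B$. (ii) Let $i\in[n]$, $j\in[r]$, $k\in[s]$. If $a^1_{i,j,k}\notin F$, $a^1_{i,j,k'}\in F$ for all $k'>k$, $i\ge reset(F)$, ${\bf b}^1_i\subseteq F$, and $B$ is a tree with $B\subseteq\mathcal B_F$, then $a^1_{i,j,k}$ is an improving switch with respect to $B$.
   Context: A tree is a set $B\subseteq E$ containing exactly one outgoing edge from every vertex other than the target $\mathsf t$; $y_B(v)$ is the cost of the path from $v$ to $\mathsf t$ in $B$; an edge $(u,v)$ is an improving switch with respect to $B$ if $c(u,v)+y_B(v)<y_B(u)$. The graph $G_{n,r,s,t}$. Let $[m]=\{1,\dots,m\}$ and $\epsilon=1/(rs)$. Vertices: a target $\mathsf t$ (also denoted $u_{n+1}$ and $w_{n+1}$), $u_i,w_i$ for $i\in[n]$, $a_{i,j,k}$ for $i\in[n],j\in[r],k\in[s]$, and $b_{i,j}$ for $i\in[n],j\in[rs]$. Edges (for all $i\in[n]$; "$t$ copies" means $t$ parallel edges indexed by $\ell\in[t]$): - $a^1_{i,j,k}:a_{i,j,k}\to a_{i,j,k+1}$, cost $0$ ($j\in[r],k\in[s-1]$); $a^1_{i,j,s}:a_{i,j,s}\to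 b_{i,1}$, cost $0$; - $a^{0,\ell}_{i,j,k}:a_{i,j,k}\to u_{i+1}$, cost $2^{2i+1}+(k-1)\epsilon$, $t$ copies ($j\in[r],k\in[s]$); - $b^1_{i,j}:b_{i,j}\to b_{i,j+1}$, cost $0$ ($j\in[rs-1]$); $b^1_{i,rs}:b_{i,rs}\to w_{i+1}$, cost $0$; - $b^{0,\ell}_{i,j}:b_{i,j}\to u_{i+1}$, cost $2^{2i+1}+1+(j-1)\epsilon$, $t$ copies ($j\in[rs]$); - $u^{1,\ell}_i:u_i\to b_{i,1}$, cost $0$, $t$ copies; $u^{0,\ell}_i:u_i\to u_{i+1}$, cost $2^{2i}$, $t$ copies; - $w^{j,\ell}_i:w_i\to a_{i,j,1}$, cost $0$, $t$ copies for each $j\in[r]$; $w^{0,\ell}_i:w_i\to w_{i+1}$, cost $2^{2i}$, $t$ copies. Edge groups: ${\bf a}^1_{i,j}=\{a^1_{i,j,k}:k\in[s]\}$, ${\bf a}^0_{i,j,k}=\{a^{0,\ell}_{i,j,k}:\ell\in[t]\}$, ${\bf b}^1_i=\{b^1_{i,j}:j\in[rs]\}$, ${\bf b}^0_{i,j}=\{b^{0,\ell}_{i,j}:\ell\in[t]\}$, ${\bf u}^1_i=\{u^{1,\ell}_i\}_\ell$, ${\bf u}^0_i=\{u^{0,\ell}_i\}_\ell$, ${\bf w}^j_i=\{w^{j,\ell}_i\}_\ell$ ($j\in[r]$), ${\bf w}^0_i=\{w^{0,\ell}_i\}_\ell$. The multi-edges are the sets ${\bf u}^1_i,{\bf u}^0_i,{\bf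 w}^0_i,{\bf b}^0_{i,j},{\bf a}^0_{i,j,k},{\bf w}^j_i$. A set $F\subseteq E$ is functional if it intersects every multi-edge. Write ${\bf a}^1_i\sqsubseteq F$ if ${\bf a}^1_{i,j}\subseteq F$ for some $j\in[r]$. Define $last({\bf b}^1_i,F)=\max(\{0\}\cup\{j\in[rs]:b^1_{i,j}\notin F\})$, $last({\bf a}^1_{i,j},F)=\max(\{0\}\cup\{k\in[s]:a^1_{i,j,k}\notin F\})$, and $reset(F)=\max(\{0\}\cup\{i\in[n]:{\bf b}^1_i\subseteq F\text{ and not }{\bf a}^1_i\sqsubseteq F\})$. For functional $F$, $\mathcal B_F\subseteq F$ consists exactly of the following edges: (i) for each $i>reset(F)$ with ${\bf b}^1_i\subseteq F$: all $b^1_{i,j}$ ($j\in[rs]$); for $j\in[r],k\in[s]$: $a^1_{i,j,k}$ if $k>last({\bf a}^1_{i,j},F)$, and ${\bf a}^0_{i,j,k}\cap F$ otherwise; ${\bf u}^1_i\cap F$; ${\bf w}^j_i\cap F$ for every $j$ with ${\bf a}^1_{i,j}\subseteq F$. (ii) for each $i>reset(F)$ with ${\bf b}^1_i\not\subseteq F$: for $j\in[rs]$: $b^1_{i,j}$ if $j>last({\bf b}^1_i,F)$, and ${\bf b}^0_{i,j}\cap F$ otherwise; ${\bf a}^0_{i,j,k}\cap F$ for all $j,k$; ${\bf u}^0_i\cap F$; ${\bf w}^0_i\cap F$. (iii) for $i=reset(F)$ (if $\ge1$): all $b^1_{i,j}$; for $j\in[r],k\in[s]$: $a^1_{i,j,k}$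 if $k>last({\bf a}^1_{i,j},F)$, and ${\bf a}^0_{i,j,k}\cap F$ otherwise; ${\bf u}^1_i\cap F$; ${\bf w}^0_i\cap F$. (iv) for each $i<reset(F)$: ${\bf b}^0_{i,j}\cap F$ for all $j\in[rs]$; ${\bf a}^0_{i,j,k}\cap F$ for all $j,k$; ${\bf u}^0_i\cap F$; ${\bf w}^j_i\cap F$ for all $j\in[r]$. *)

theory Defs
  imports Main "HOL.Real"
begin

text \<open>Vertices. T is the target t (= u_{n+1} = w_{n+1}).
  A i j k = a_{i,j,k}, Bv i j = b_{i,j}.\<close>
datatype vertex = T | U nat | W nat | A nat nat nat | Bv nat nat

text \<open>Edges (parallel copies carry an explicit copy index l):
  Ea1 i j k = a^1_{i,j,k}, Ea0 i j k l = a^{0,l}_{i,j,k}, Eb1 i j = b^1_{i,j},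
  Eb0 i j l = b^{0,l}_{i,j}, Eu1 i l = u^{1,l}_i, Eu0 i l = u^{0,l}_i,
  Ew i j l = w^{j,l}_i, Ew0 i l = w^{0,l}_i.\<close>
datatype edge = Ea1 nat nat nat | Ea0 nat nat nat nat | Eb1 nat nat | Eb0 nat nat nat
  | Eu1 nat nat | Eu0 nat nat | Ew nat nat nat | Ew0 nat nat

definition uN :: "nat \<Rightarrow> nat \<Rightarrow> vertex" where
  "uN n i = (if i = Suc n then T else U i)"
definition wN :: "nat \<Rightarrow> nat \<Rightarrow> vertex" where
  "wN n i = (if i = Suc n then T else W i)"

definition Vset :: "nat \<Rightarrow> nat \<Rightarrow> nat \<Rightarrow> vertex set" where
  "Vset n r s = {T} \<union> {U i | i. i \<in> {1..n}} \<union> {W i | i. i \<in> {1..n}}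
     \<union> {A i j k | i j k. i \<in> {1..n} \<and> j \<in> {1..r} \<and> k \<in> {1..s}}
     \<union> {Bv i j | i j. i \<in> {1..n} \<and> j \<in> {1..r*s}}"

definition Eset :: "nat \<Rightarrow> nat \<Rightarrow> nat \<Rightarrow> nat \<Rightarrow> edge set" where
  "Eset n r s t =
     {Ea1 i j k | i j k. i \<in> {1..n} \<and> j \<in> {1..r} \<and> k \<in> {1..s}}
   \<union> {Ea0 i j k l | i j k l. i \<in> {1..n} \<and> j \<in> {1..r} \<and> k \<in> {1..s} \<and> l \<in> {1..t}}
   \<union> {Eb1 i j | i j. i \<in> {1..n} \<and> j \<in> {1..r*s}}
   \<union> {Eb0 i j l | i j l. i \<in> {1..n} \<and> j \<in> {1..r*s} \<and> l \<in> {1..t}}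
   \<union> {Eu1 i l | i l. i \<in> {1..n} \<and> l \<in> {1..t}}
   \<union> {Eu0 i l | i l. i \<in> {1..n} \<and> l \<in> {1..t}}
   \<union> {Ew i j l | i j l. i \<in> {1..n} \<and> j \<in> {1..r} \<and> l \<in> {1..t}}
   \<union> {Ew0 i l | i l. i \<in> {1..n} \<and> l \<in> {1..t}}"

fun src :: "edge \<Rightarrow> vertex" where
  "src (Ea1 i j k) = A i j k"
| "src (Ea0 i j k l) = A i j k"
| "src (Eb1 i j) = Bv i j"
| "src (Eb0 i j l) = Bv i j"
| "src (Eu1 i l) = U i"
| "src (Eu0 i l) = U i"
| "src (Ew i j l) = W i"
| "src (Ew0 i l) = W i"

fun tgt :: "nat \<Rightarrow> nat \<Rightarrow> nat \<Rightarrow> edge \<Rightarrow> vertex" where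
  "tgt n r s (Ea1 i j k) = (if k < s then A i j (Suc k) else Bv i 1)"
| "tgt n r s (Ea0 i j k l) = uN n (Suc i)"
| "tgt n r s (Eb1 i j) = (if j < r*s then Bv i (Suc j) else wN n (Suc i))"
| "tgt n r s (Eb0 i j l) = uN n (Suc i)"
| "tgt n r s (Eu1 i l) = Bv i 1"
| "tgt n r s (Eu0 i l) = uN n (Suc i)"
| "tgt n r s (Ew i j l) = A i j 1"
| "tgt n r s (Ew0 i l) = wN n (Suc i)"

definition eps :: "nat \<Rightarrow> nat \<Rightarrow> real" where
  "eps r s = 1 / (real r * real s)"

fun cost :: "nat \<Rightarrow> nat \<Rightarrow> edge \<Rightarrow> real" where
  "cost r s (Ea1 i j k) = 0"
| "cost r s (Ea0 i j k l) = 2 ^ (2*i+1) + (real k - 1) * eps r s"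
| "cost r s (Eb1 i j) = 0"
| "cost r s (Eb0 i j l) = 2 ^ (2*i+1) + 1 + (real j - 1) * eps r s"
| "cost r s (Eu1 i l) = 0"
| "cost r s (Eu0 i l) = 2 ^ (2*i)"
| "cost r s (Ew i j l) = 0"
| "cost r s (Ew0 i l) = 2 ^ (2*i)"

definition is_tree :: "nat \<Rightarrow> nat \<Rightarrow> nat \<Rightarrow> nat \<Rightarrow> edge set \<Rightarrow> bool" where
  "is_tree n r s t B \<longleftrightarrow> B \<subseteq> Eset n r s t \<and>
     (\<forall>v \<in> Vset n r s - {T}. \<exists>!e. e \<in> B \<and> src e = v)"

inductive path_cost :: "nat \<Rightarrow> nat \<Rightarrow> nat \<Rightarrow> edge set \<Rightarrow> vertex \<Rightarrow> real \<Rightarrow> bool"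
  for n r s B where
  pc_T: "path_cost n r s B T 0"
| pc_step: "e \<in> B \<Longrightarrow> src e = v \<Longrightarrow> path_cost n r s B (tgt n r s e) c
            \<Longrightarrow> path_cost n r s B v (cost r s e + c)"

definition yB :: "nat \<Rightarrow> nat \<Rightarrow> nat \<Rightarrow> edge set \<Rightarrow> vertex \<Rightarrow> real" where
  "yB n r s B v = (THE c. path_cost n r s B v c)"

definition improving :: "nat \<Rightarrow> nat \<Rightarrow> nat \<Rightarrow> nat \<Rightarrow> edge set \<Rightarrow> edge \<Rightarrow> bool" where
  "improving n r s t B e \<longleftrightarrow> e \<in> Eset n r s t \<and>
     cost r s e + yB n r s B (tgt n r s e) < yB n r s B (src e)"

definition a1grp :: "nat \<Rightarrow> nat \<Rightarrow> nat \<Rightarrow> edge set" where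
  "a1grp s i j = {Ea1 i j k | k. k \<in> {1..s}}"
definition a0grp :: "nat \<Rightarrow> nat \<Rightarrow> nat \<Rightarrow> nat \<Rightarrow> edge set" where
  "a0grp t i j k = {Ea0 i j k l | l. l \<in> {1..t}}"
definition b1grp :: "nat \<Rightarrow> nat \<Rightarrow> nat \<Rightarrow> edge set" where
  "b1grp r s i = {Eb1 i j | j. j \<in> {1..r*s}}"
definition b0grp :: "nat \<Rightarrow> nat \<Rightarrow> nat \<Rightarrow> edge set" where
  "b0grp t i j = {Eb0 i j l | l. l \<in> {1..t}}"
definition u1grp :: "nat \<Rightarrow> nat \<Rightarrow> edge set" where
  "u1grp t i = {Eu1 i l | l. l \<in> {1..t}}"
definition u0grp :: "nat \<Rightarrow> nat \<Rightarrow> edge set" where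
  "u0grp t i = {Eu0 i l | l. l \<in> {1..t}}"
definition wgrp :: "nat \<Rightarrow> nat \<Rightarrow> nat \<Rightarrow> edge set" where
  "wgrp t i j = {Ew i j l | l. l \<in> {1..t}}"
definition w0grp :: "nat \<Rightarrow> nat \<Rightarrow> edge set" where
  "w0grp t i = {Ew0 i l | l. l \<in> {1..t}}"

definition multi_edges :: "nat \<Rightarrow> nat \<Rightarrow> nat \<Rightarrow> nat \<Rightarrow> edge set set" where
  "multi_edges n r s t =
     {u1grp t i | i. i \<in> {1..n}} \<union> {u0grp t i | i. i \<in> {1..n}} \<union> {w0grp t i | i. i \<in> {1..n}}
   \<union> {b0grp t i j | i j. i \<in> {1..n} \<and> j \<in> {1..r*s}}
   \<union> {a0grp t i j k | i j k. i \<in> {1..n} \<and> j \<in> {1..r} \<and> k \<in> {1..s}}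
   \<union> {wgrp t i j | i j. i \<in> {1..n} \<and> j \<in> {1..r}}"

definition functional :: "nat \<Rightarrow> nat \<Rightarrow> nat \<Rightarrow> nat \<Rightarrow> edge set \<Rightarrow> bool" where
  "functional n r s t F \<longleftrightarrow> F \<subseteq> Eset n r s t \<and> (\<forall>M \<in> multi_edges n r s t. M \<inter> F \<noteq> {})"

text \<open>a1_sq s r F i corresponds to a^1_i \<sqsubseteq> F.\<close>
definition a1_sq :: "nat \<Rightarrow> nat \<Rightarrow> edge set \<Rightarrow> nat \<Rightarrow> bool" where
  "a1_sq r s F i \<longleftrightarrow> (\<exists>j \<in> {1..r}. a1grp s i j \<subseteq> F)"

definition last_b :: "nat \<Rightarrow> nat \<Rightarrow> edge set \<Rightarrow> nat \<Rightarrow> nat" where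
  "last_b r s F i = Max ({0} \<union> {j \<in> {1..r*s}. Eb1 i j \<notin> F})"

definition last_a :: "nat \<Rightarrow> edge set \<Rightarrow> nat \<Rightarrow> nat \<Rightarrow> nat" where
  "last_a s F i j = Max ({0} \<union> {k \<in> {1..s}. Ea1 i j k \<notin> F})"

definition reset :: "nat \<Rightarrow> nat \<Rightarrow> nat \<Rightarrow> edge set \<Rightarrow> nat" where
  "reset n r s F = Max ({0} \<union> {i \<in> {1..n}. b1grp r s i \<subseteq> F \<and> \<not> a1_sq r s F i})"

definition a_part :: "nat \<Rightarrow> nat \<Rightarrow> nat \<Rightarrow> edge set \<Rightarrow> nat \<Rightarrow> edge set" where
  "a_part r s t F i =
     {Ea1 i j k | j k. j \<in> {1..r} \<and> k \<in> {1..s} \<and> k > last_a s F i j}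
   \<union> (\<Union>{a0grp t i j k \<inter> F | j k. j \<in> {1..r} \<and> k \<in> {1..s} \<and> k \<le> last_a s F i j})"

definition all_a0 :: "nat \<Rightarrow> nat \<Rightarrow> nat \<Rightarrow> edge set \<Rightarrow> nat \<Rightarrow> edge set" where
  "all_a0 r s t F i = \<Union>{a0grp t i j k \<inter> F | j k. j \<in> {1..r} \<and> k \<in> {1..s}}"

definition BF_level :: "nat \<Rightarrow> nat \<Rightarrow> nat \<Rightarrow> nat \<Rightarrow> edge set \<Rightarrow> nat \<Rightarrow> edge set" where
  "BF_level n r s t F i =
    (if i > reset n r s F \<and> b1grp r s i \<subseteq> F then
       b1grp r s i \<union> a_part r s t F i \<union> (u1grp t i \<inter> F)
       \<union> \<Union>{wgrp t i j \<inter> F | j. j \<in> {1..r} \<and> a1grp s i j \<subseteq> F}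
     else if i > reset n r s F then
       {Eb1 i j | j. j \<in> {1..r*s} \<and> j > last_b r s F i}
       \<union> \<Union>{b0grp t i j \<inter> F | j. j \<in> {1..r*s} \<and> j \<le> last_b r s F i}
       \<union> all_a0 r s t F i \<union> (u0grp t i \<inter> F) \<union> (w0grp t i \<inter> F)
     else if i = reset n r s F then
       b1grp r s i \<union> a_part r s t F i \<union> (u1grp t i \<inter> F) \<union> (w0grp t i \<inter> F)
     else
       \<Union>{b0grp t i j \<inter> F | j. j \<in> {1..r*s}}
       \<union> all_a0 r s t F i \<union> (u0grp t i \<inter> F)
       \<union> \<Union>{wgrp t i j \<inter> F | j. j \<in> {1..r}})"

definition BF :: "nat \<Rightarrow> nat \<Rightarrow> nat \<Rightarrow> nat \<Rightarrow> edge set \<Rightarrow> edge set" where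
  "BF n r s t F = (\<Union>i \<in> {1..n}. BF_level n r s t F i)"

end

theory Submission
  imports Defs
begin


fun lvl :: "nat \<Rightarrow> vertex \<Rightarrow> nat" where
  "lvl n T = Suc n" | "lvl n (U i) = i" | "lvl n (W i) = i" | "lvl n (A i j k) = i" | "lvl n (Bv i j) = i"

fun pos :: "nat \<Rightarrow> nat \<Rightarrow> vertex \<Rightarrow> nat" where
  "pos r s T = 0" | "pos r s (U i) = r*s+s+2" | "pos r s (W i) = r*s+s+2"
| "pos r s (A i j k) = r*s+1+s-k" | "pos r s (Bv i j) = r*s+1-j"

definition rk :: "nat \<Rightarrow> nat \<Rightarrow> nat \<Rightarrow> vertex \<Rightarrow> nat" where
  "rk n r s v = (Suc n - lvl n v) * (r*s+s+3) + pos r s v"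

lemma pos_lt: "pos r s v < r*s+s+3"
  by (cases v) auto

lemma rk_cross:
  assumes "lvl n a < lvl n b" "lvl n b \<le> Suc n"
  shows "rk n r s b < rk n r s a"
proof -
  define M where "M = r*s+s+3"
  define d where "d = Suc n - lvl n b"
  have "Suc d \<le> Suc n - lvl n a" using assms unfolding d_def by linarith
  hence "Suc d * M \<le> (Suc n - lvl n a) * M" by (rule mult_le_mono1)
  moreover have "pos r s b < M" using pos_lt M_def by simp
  ultimately show ?thesis unfolding rk_def M_def[symmetric] d_def[symmetric] by simp
qed

lemma lvl_uN: "i \<le> n \<Longrightarrow> lvl n (uN n (Suc i)) = Suc i"
  by (auto simp: uN_def)
lemma lvl_wN: "i \<le> n \<Longrightarrow> lvl n (wN n (Suc i)) = Suc i"
  by (auto simp: wN_def)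

lemma rk_same:
  assumes "lvl n a = lvl n b" "pos r s b < pos r s a"
  shows "rk n r s b < rk n r s a"
  using assms unfolding rk_def by simp

lemma Vset_simps: "T \<in> Vset n r s" "U i \<in> Vset n r s \<longleftrightarrow> i \<in> {1..n}"
  "W i \<in> Vset n r s \<longleftrightarrow> i \<in> {1..n}"
  "A i j k \<in> Vset n r s \<longleftrightarrow> i \<in> {1..n} \<and> j \<in> {1..r} \<and> k \<in> {1..s}"
  "Bv i j \<in> Vset n r s \<longleftrightarrow> i \<in> {1..n} \<and> j \<in> {1..r*s}"
  unfolding Vset_def by auto

lemma Eset_simps:
  "Ea1 i j k \<in> Eset n r s t \<longleftrightarrow> i \<in> {1..n} \<and> j \<in> {1..r} \<and> k \<in> {1..s}"
  "Ea0 i j k l \<in> Eset n r s t \<longleftrightarrow> i \<in> {1..n} \<and> j \<in> {1..r} \<and> k \<in> {1..s} \<and> l \<in> {1..t}"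
  "Eb1 i j \<in> Eset n r s t \<longleftrightarrow> i \<in> {1..n} \<and> j \<in> {1..r*s}"
  "Eb0 i j l \<in> Eset n r s t \<longleftrightarrow> i \<in> {1..n} \<and> j \<in> {1..r*s} \<and> l \<in> {1..t}"
  "Eu1 i l \<in> Eset n r s t \<longleftrightarrow> i \<in> {1..n} \<and> l \<in> {1..t}"
  "Eu0 i l \<in> Eset n r s t \<longleftrightarrow> i \<in> {1..n} \<and> l \<in> {1..t}"
  "Ew i j l \<in> Eset n r s t \<longleftrightarrow> i \<in> {1..n} \<and> j \<in> {1..r} \<and> l \<in> {1..t}"
  "Ew0 i l \<in> Eset n r s t \<longleftrightarrow> i \<in> {1..n} \<and> l \<in> {1..t}"
  unfolding Eset_def by auto

lemma edge_rk:
  assumes "e \<in> Eset n r s t"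
  shows "rk n r s (tgt n r s e) < rk n r s (src e)"
proof (cases e)
  case (Ea1 i j k) then show ?thesis using assms
    by (cases "k < s") (auto intro!: rk_same simp: Eset_simps)
next
  case (Ea0 i j k l) then show ?thesis using assms
    by (auto intro!: rk_cross simp: Eset_simps lvl_uN)
next
  case (Eb1 i j) then show ?thesis using assms
  proof (cases "j < r*s")
    case True then show ?thesis using Eb1 by (auto intro!: rk_same)
  next
    case False then show ?thesis using Eb1 assms by (auto intro!: rk_cross simp: Eset_simps lvl_wN)
  qed
next
  case (Eb0 i j l) then show ?thesis using assms
    by (auto intro!: rk_cross simp: Eset_simps lvl_uN)
next
  case (Eu1 i l) then show ?thesis using assms
    by (auto intro!: rk_same simp: Eset_simps)
next
  case (Eu0 i l) then show ?thesis using assms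
    by (auto intro!: rk_cross simp: Eset_simps lvl_uN)
next
  case (Ew i j l) then show ?thesis using assms
    by (auto intro!: rk_same simp: Eset_simps)
next
  case (Ew0 i l) then show ?thesis using assms
    by (auto intro!: rk_cross simp: Eset_simps lvl_wN)
qed

lemma src_in: "e \<in> Eset n r s t \<Longrightarrow> src e \<in> Vset n r s - {T}"
  by (cases e) (auto simp: Eset_simps Vset_simps)

lemma tgt_in: "e \<in> Eset n r s t \<Longrightarrow> 1 \<le> r \<Longrightarrow> 1 \<le> s \<Longrightarrow> tgt n r s e \<in> Vset n r s"
  by (cases e) (auto simp: Eset_simps Vset_simps uN_def wN_def)

lemma ex1_same: "\<exists>!x. P x \<Longrightarrow> P a \<Longrightarrow> P b \<Longrightarrow> a = b"
  by blast

lemma tree_ex1: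
  assumes "is_tree n r s t B" "v \<in> Vset n r s - {T}"
  shows "\<exists>!e. e \<in> B \<and> src e = v"
proof -
  have "\<forall>v \<in> Vset n r s - {T}. \<exists>!e. e \<in> B \<and> src e = v"
    using assms(1) unfolding is_tree_def by (rule conjunct2)
  then show ?thesis using assms(2) by (rule bspec)
qed

lemma tree_uniq:
  assumes "is_tree n r s t B" "e1 \<in> B" "e2 \<in> B" "src e1 = src e2"
  shows "e1 = e2"
proof -
  have "B \<subseteq> Eset n r s t" using assms(1) unfolding is_tree_def by (rule conjunct1)
  then have "src e1 \<in> Vset n r s - {T}" using assms(2) src_in by blast
  then have u: "\<exists>!e. e \<in> B \<and> src e = src e1" by (rule tree_ex1[OF assms(1)])
  show ?thesis by (rule ex1_same[OF u]) (use assms in auto)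
qed

lemma tree_out:
  assumes "is_tree n r s t B" "v \<in> Vset n r s - {T}"
  shows "\<exists>e\<in>B. src e = v"
  using ex1_implies_ex[OF tree_ex1[OF assms]] by blast

lemma pc_unique:
  assumes tr: "is_tree n r s t B"
  shows "path_cost n r s B v c1 \<Longrightarrow> path_cost n r s B v c2 \<Longrightarrow> c1 = c2"
proof (induction v c1 arbitrary: c2 rule: path_cost.induct)
  case pc_T
  then show ?case
  proof (cases rule: path_cost.cases)
    case (pc_step e c) then show ?thesis by (cases e) simp_all
  qed simp
next
  case (pc_step e v c)
  note IH = pc_step.IH and eB = pc_step.hyps(1) and ev = pc_step.hyps(2)
  from pc_step.prems show ?case
  proof (cases rule: path_cost.cases)
    case pc_T then show ?thesis using pc_step.hyps(2) by (cases e) simp_all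
  next
    case (pc_step e' c')
    then have "e' = e" using tree_uniq[OF tr] eB ev by metis
    then show ?thesis using IH[of c'] pc_step(1,4) by simp
  qed
qed

lemma pc_exists:
  assumes tr: "is_tree n r s t B" and rs: "1 \<le> r" "1 \<le> s"
  shows "v \<in> Vset n r s \<Longrightarrow> \<exists>c. path_cost n r s B v c"
proof (induction v rule: measure_induct_rule[where f="rk n r s"])
  case (less v)
  show ?case
  proof (cases "v = T")
    case True then show ?thesis using pc_T by blast
  next
    case False
    then obtain e where e: "e \<in> B" "src e = v" using tree_out[OF tr] less.prems by blast
    have eE: "e \<in> Eset n r s t" using e(1) tr unfolding is_tree_def by blast
    have "rk n r s (tgt n r s e) < rk n r s v" using edge_rk[OF eE] e by simp
    moreover have "tgt n r s e \<in> Vset n r s" using tgt_in[OF eE rs] .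
    ultimately obtain c where "path_cost n r s B (tgt n r s e) c" using less.IH by blast
    then show ?thesis using pc_step[OF e] by blast
  qed
qed

lemma yB_eq:
  assumes "is_tree n r s t B" "path_cost n r s B v c"
  shows "yB n r s B v = c"
  unfolding yB_def using pc_unique[OF assms(1)] assms(2) by blast

lemma yB_step:
  assumes tr: "is_tree n r s t B" and rs: "1 \<le> r" "1 \<le> s" and e: "e \<in> B"
  shows "yB n r s B (src e) = cost r s e + yB n r s B (tgt n r s e)"
proof -
  have eE: "e \<in> Eset n r s t" using e tr unfolding is_tree_def by blast
  obtain c where c: "path_cost n r s B (tgt n r s e) c"
    using pc_exists[OF tr rs tgt_in[OF eE rs]] by blast
  have "path_cost n r s B (src e) (cost r s e + c)" using pc_step[OF e refl c] .
  then show ?thesis using yB_eq[OF tr] c by simp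
qed



fun eidx :: "edge \<Rightarrow> nat" where
  "eidx (Ea1 i j k) = i" | "eidx (Ea0 i j k l) = i" | "eidx (Eb1 i j) = i" | "eidx (Eb0 i j l) = i"
| "eidx (Eu1 i l) = i" | "eidx (Eu0 i l) = i" | "eidx (Ew i j l) = i" | "eidx (Ew0 i l) = i"

lemmas grp_defs = a1grp_def a0grp_def b1grp_def b0grp_def u1grp_def u0grp_def wgrp_def w0grp_def

lemma mem_grps:
  "e \<in> a1grp s i j \<longleftrightarrow> (\<exists>k. e = Ea1 i j k \<and> k \<in> {1..s})"
  "e \<in> a0grp t i j k \<longleftrightarrow> (\<exists>l. e = Ea0 i j k l \<and> l \<in> {1..t})"
  "e \<in> b1grp r s i \<longleftrightarrow> (\<exists>j. e = Eb1 i j \<and> j \<in> {1..r*s})"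
  "e \<in> b0grp t i j \<longleftrightarrow> (\<exists>l. e = Eb0 i j l \<and> l \<in> {1..t})"
  "e \<in> u1grp t i \<longleftrightarrow> (\<exists>l. e = Eu1 i l \<and> l \<in> {1..t})"
  "e \<in> u0grp t i \<longleftrightarrow> (\<exists>l. e = Eu0 i l \<and> l \<in> {1..t})"
  "e \<in> wgrp t i j \<longleftrightarrow> (\<exists>l. e = Ew i j l \<and> l \<in> {1..t})"
  "e \<in> w0grp t i \<longleftrightarrow> (\<exists>l. e = Ew0 i l \<and> l \<in> {1..t})"
  by (auto simp: grp_defs)

lemma mem_a_part: "e \<in> a_part r s t F i \<longleftrightarrow>
   (\<exists>j k. e = Ea1 i j k \<and> j \<in> {1..r} \<and> k \<in> {1..s} \<and> last_a s F i j < k)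
 \<or> (\<exists>j k. e \<in> a0grp t i j k \<and> e \<in> F \<and> j \<in> {1..r} \<and> k \<in> {1..s} \<and> k \<le> last_a s F i j)"
  unfolding a_part_def by blast

lemma mem_all_a0: "e \<in> all_a0 r s t F i \<longleftrightarrow>
   (\<exists>j k. e \<in> a0grp t i j k \<and> e \<in> F \<and> j \<in> {1..r} \<and> k \<in> {1..s})"
  unfolding all_a0_def by blast

lemma mem_U1: "e \<in> \<Union>{wgrp t i j \<inter> F | j. j \<in> {1..r} \<and> a1grp s i j \<subseteq> F} \<longleftrightarrow>
   (\<exists>j. e \<in> wgrp t i j \<and> e \<in> F \<and> j \<in> {1..r} \<and> a1grp s i j \<subseteq> F)" by blast
lemma mem_U2: "e \<in> \<Union>{b0grp t i j \<inter> F | j. j \<in> {1..r*s} \<and> j \<le> last_b r s F i} \<longleftrightarrow>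
   (\<exists>j. e \<in> b0grp t i j \<and> e \<in> F \<and> j \<in> {1..r*s} \<and> j \<le> last_b r s F i)" by blast
lemma mem_U3: "e \<in> \<Union>{b0grp t i j \<inter> F | j. j \<in> {1..r*s}} \<longleftrightarrow>
   (\<exists>j. e \<in> b0grp t i j \<and> e \<in> F \<and> j \<in> {1..r*s})" by blast
lemma mem_U4: "e \<in> \<Union>{wgrp t i j \<inter> F | j. j \<in> {1..r}} \<longleftrightarrow>
   (\<exists>j. e \<in> wgrp t i j \<and> e \<in> F \<and> j \<in> {1..r})" by blast
lemma mem_U5: "e \<in> {Eb1 i j | j. j \<in> {1..r*s} \<and> j > last_b r s F i} \<longleftrightarrow>
   (\<exists>j. e = Eb1 i j \<and> j \<in> {1..r*s} \<and> j > last_b r s F i)" by blast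

lemmas memBF = mem_a_part mem_all_a0 mem_U1 mem_U2 mem_U3 mem_U4 mem_U5

lemma BF_level_idx: "e \<in> BF_level n r s t F i \<Longrightarrow> eidx e = i"
  unfolding BF_level_def
  by (cases e) (auto simp: memBF mem_grps split: if_splits)

lemma BF_in: "e \<in> BF n r s t F \<Longrightarrow> e \<in> BF_level n r s t F (eidx e) \<and> eidx e \<in> {1..n}"
  unfolding BF_def using BF_level_idx by blast

lemma ex_Eb0: "Eb0 i j l \<in> BF_level n r s t F i \<Longrightarrow> reset n r s F \<le> i \<Longrightarrow> j \<le> last_b r s F i"
  unfolding BF_level_def by (auto simp: memBF mem_grps split: if_splits)

lemma ex_Ea0: "Ea0 i j k l \<in> BF_level n r s t F i \<Longrightarrow> reset n r s F \<le> i \<Longrightarrow> b1grp r s i \<subseteq> F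
   \<Longrightarrow> k \<le> last_a s F i j"
  unfolding BF_level_def by (auto simp: memBF mem_grps split: if_splits)

lemma ex_U1: "Eu1 i l \<in> BF_level n r s t F i \<Longrightarrow> reset n r s F < i \<Longrightarrow> b1grp r s i \<subseteq> F"
  unfolding BF_level_def by (auto simp: memBF mem_grps split: if_splits)

lemma ex_U0: "Eu0 i l \<in> BF_level n r s t F i \<Longrightarrow> reset n r s F < i \<Longrightarrow> \<not> b1grp r s i \<subseteq> F"
  unfolding BF_level_def by (auto simp: memBF mem_grps split: if_splits)

lemma ex_W: "Ew i j l \<in> BF_level n r s t F i \<Longrightarrow> reset n r s F < i \<Longrightarrow>
    b1grp r s i \<subseteq> F \<and> a1grp s i j \<subseteq> F \<and> j \<in> {1..r}"
  unfolding BF_level_def by (auto simp: memBF mem_grps split: if_splits)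

lemma ex_W0: "Ew0 i l \<in> BF_level n r s t F i \<Longrightarrow> reset n r s F < i \<Longrightarrow> \<not> b1grp r s i \<subseteq> F"
  unfolding BF_level_def by (auto simp: memBF mem_grps split: if_splits)

lemma last_a_lt: "1 \<le> k \<Longrightarrow> (\<forall>k'. k \<le> k' \<and> k' \<le> s \<longrightarrow> Ea1 i j k' \<in> F) \<Longrightarrow> last_a s F i j < k"
  unfolding last_a_def by (subst Max_less_iff) (auto, metis leI)

lemma last_b_lt: "1 \<le> j \<Longrightarrow> (\<forall>j'. j \<le> j' \<and> j' \<le> r*s \<longrightarrow> Eb1 i j' \<in> F) \<Longrightarrow> last_b r s F i < j"
  unfolding last_b_def by (subst Max_less_iff) (auto, metis leI)

lemma last_a_in: "k \<in> {1..s} \<Longrightarrow> last_a s F i j < k \<Longrightarrow> Ea1 i j k \<in> F"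
  unfolding last_a_def by (rule ccontr) (auto simp: Max_less_iff, metis Suc_leI less_irrefl)

lemma last_b_in: "j \<in> {1..r*s} \<Longrightarrow> last_b r s F i < j \<Longrightarrow> Eb1 i j \<in> F"
  unfolding last_b_def by (rule ccontr) (auto simp: Max_less_iff, metis Suc_leI less_irrefl)

lemma reset_prop:
  assumes "1 \<le> reset n r s F"
  shows "reset n r s F \<in> {1..n} \<and> b1grp r s (reset n r s F) \<subseteq> F"
proof -
  let ?S = "{0} \<union> {i \<in> {1..n}. b1grp r s i \<subseteq> F \<and> \<not> a1_sq r s F i}"
  have "Max ?S \<in> ?S" by (rule Max_in) auto
  then show ?thesis using assms unfolding reset_def by auto
qed

lemma a_part_sub: "a_part r s t F i \<subseteq> F"
proof
  fix e assume "e \<in> a_part r s t F i"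
  then show "e \<in> F" unfolding a_part_def
  proof (elim UnE)
    assume "e \<in> {Ea1 i j k |j k. j \<in> {1..r} \<and> k \<in> {1..s} \<and> last_a s F i j < k}"
    then show ?thesis using last_a_in by blast
  qed blast
qed

lemma all_a0_sub: "all_a0 r s t F i \<subseteq> F"
  unfolding all_a0_def by blast

lemma b1part_sub: "{Eb1 i j | j. j \<in> {1..r*s} \<and> j > last_b r s F i} \<subseteq> F"
  using last_b_in by blast

lemma BF_level_sub:
  assumes i: "i \<in> {1..n}"
  shows "BF_level n r s t F i \<subseteq> F"
proof -
  have r: "i = reset n r s F \<Longrightarrow> b1grp r s i \<subseteq> F" using reset_prop[of n r s F] i by auto
  have s1: "\<Union>{wgrp t i j \<inter> F | j. j \<in> {1..r} \<and> a1grp s i j \<subseteq> F} \<subseteq> F" by blast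
  have s2: "\<Union>{b0grp t i j \<inter> F | j. j \<in> {1..r*s} \<and> j \<le> last_b r s F i} \<subseteq> F" by blast
  have s3: "\<Union>{b0grp t i j \<inter> F | j. j \<in> {1..r*s}} \<subseteq> F" by blast
  have s4: "\<Union>{wgrp t i j \<inter> F | j. j \<in> {1..r}} \<subseteq> F" by blast
  show ?thesis
    unfolding BF_level_def
    using r s1 s2 s3 s4 a_part_sub[of r s t F i] all_a0_sub[of r s t F i] b1part_sub[of i r s F]
    apply (simp only: split: if_split)
    apply (intro conjI impI Un_least; assumption?)
    apply (simp_all add: inf.coboundedI2)
    done
qed

lemma BF_sub: "BF n r s t F \<subseteq> F"
  unfolding BF_def using BF_level_sub by blast



lemma src_Bv: "src e = Bv i j \<Longrightarrow> e = Eb1 i j \<or> (\<exists>l. e = Eb0 i j l)" by (cases e) auto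
lemma src_A: "src e = A i j k \<Longrightarrow> e = Ea1 i j k \<or> (\<exists>l. e = Ea0 i j k l)" by (cases e) auto
lemma src_U: "src e = U i \<Longrightarrow> (\<exists>l. e = Eu1 i l) \<or> (\<exists>l. e = Eu0 i l)" by (cases e) auto
lemma src_W: "src e = W i \<Longrightarrow> (\<exists>j l. e = Ew i j l) \<or> (\<exists>l. e = Ew0 i l)" by (cases e) auto

lemma out_BF:
  assumes tr: "is_tree n r s t B" and sub: "B \<subseteq> BF n r s t F" and v: "v \<in> Vset n r s - {T}"
  shows "\<exists>e. e \<in> B \<and> src e = v \<and> e \<in> BF_level n r s t F (eidx e) \<and> e \<in> F"
proof -
  obtain e where "e \<in> B" "src e = v" using tree_out[OF tr v] by blast
  then show ?thesis using sub BF_in BF_sub by blast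
qed

lemma chainB:
  assumes tr: "is_tree n r s t B" and sub: "B \<subseteq> BF n r s t F" and rs: "1 \<le> r" "1 \<le> s"
    and i: "i \<in> {1..n}" "reset n r s F \<le> i"
  shows "j \<in> {1..r*s} \<Longrightarrow> (\<forall>j'. j \<le> j' \<and> j' \<le> r*s \<longrightarrow> Eb1 i j' \<in> F)
     \<Longrightarrow> yB n r s B (Bv i j) = yB n r s B (wN n (Suc i))"
proof (induction j rule: measure_induct_rule[where f="\<lambda>j. r*s - j"])
  case (less j)
  have "Bv i j \<in> Vset n r s - {T}" using less.prems i by (simp add: Vset_simps)
  then obtain e where e: "e \<in> B" "src e = Bv i j" "e \<in> BF_level n r s t F (eidx e)"
    using out_BF[OF tr sub] by blast
  have lt: "last_b r s F i < j" using last_b_lt less.prems by auto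
  have "e = Eb1 i j" using src_Bv[OF e(2)] e(3) ex_Eb0[of i j _ n r s t F] lt i(2) by auto
  then have y: "yB n r s B (Bv i j) = yB n r s B (tgt n r s (Eb1 i j))"
    using yB_step[OF tr rs e(1)] e(2) by simp
  show ?case
  proof (cases "j < r*s")
    case True
    then have "yB n r s B (Bv i (Suc j)) = yB n r s B (wN n (Suc i))"
      using less.IH[of "Suc j"] less.prems by auto
    then show ?thesis using y True by simp
  next
    case False then show ?thesis using y by simp
  qed
qed

lemma chainA:
  assumes tr: "is_tree n r s t B" and sub: "B \<subseteq> BF n r s t F" and rs: "1 \<le> r" "1 \<le> s"
    and i: "i \<in> {1..n}" "reset n r s F \<le> i" and b1: "b1grp r s i \<subseteq> F" and j: "j \<in> {1..r}"
  shows "k \<in> {1..s} \<Longrightarrow> (\<forall>k'. k \<le> k' \<and> k' \<le> s \<longrightarrow> Ea1 i j k' \<in> F)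
     \<Longrightarrow> yB n r s B (A i j k) = yB n r s B (Bv i 1)"
proof (induction k rule: measure_induct_rule[where f="\<lambda>k. s - k"])
  case (less k)
  have "A i j k \<in> Vset n r s - {T}" using less.prems i j by (simp add: Vset_simps)
  then obtain e where e: "e \<in> B" "src e = A i j k" "e \<in> BF_level n r s t F (eidx e)"
    using out_BF[OF tr sub] by blast
  have lt: "last_a s F i j < k" using last_a_lt less.prems by auto
  have "e = Ea1 i j k" using src_A[OF e(2)] e(3) ex_Ea0[of i j k _ n r s t F] lt i(2) b1 by auto
  then have y: "yB n r s B (A i j k) = yB n r s B (tgt n r s (Ea1 i j k))"
    using yB_step[OF tr rs e(1)] e(2) by simp
  show ?case
  proof (cases "k < s")
    case True
    then have "yB n r s B (A i j (Suc k)) = yB n r s B (Bv i 1)"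
      using less.IH[of "Suc k"] less.prems by auto
    then show ?thesis using y True by simp
  next
    case False then show ?thesis using y by simp
  qed
qed

lemma b1_all: "b1grp r s i \<subseteq> F \<Longrightarrow> (\<forall>j'. 1 \<le> j' \<and> j' \<le> r*s \<longrightarrow> Eb1 i j' \<in> F)"
  unfolding b1grp_def by auto

lemma a1_all: "a1grp s i j \<subseteq> F \<Longrightarrow> (\<forall>k'. 1 \<le> k' \<and> k' \<le> s \<longrightarrow> Ea1 i j k' \<in> F)"
  unfolding a1grp_def by auto

lemma diffWU:
  assumes tr: "is_tree n r s t B" and sub: "B \<subseteq> BF n r s t F" and rs: "1 \<le> r" "1 \<le> s"
  shows "reset n r s F < i \<Longrightarrow> i \<le> Suc n \<Longrightarrow> yB n r s B (wN n i) = yB n r s B (uN n i)"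
proof (induction i rule: measure_induct_rule[where f="\<lambda>i. Suc n - i"])
  case (less i)
  show ?case
  proof (cases "i = Suc n")
    case True then show ?thesis by (simp add: uN_def wN_def)
  next
    case False
    then have iN: "i \<in> {1..n}" "uN n i = U i" "wN n i = W i" "uN n (Suc i) = uN n (Suc i)"
      using less.prems by (auto simp: uN_def wN_def)
    have IH: "yB n r s B (wN n (Suc i)) = yB n r s B (uN n (Suc i))"
      using less.IH[of "Suc i"] less.prems False by auto
    have "U i \<in> Vset n r s - {T}" using iN by (simp add: Vset_simps)
    then obtain eu where eu: "eu \<in> B" "src eu = U i" "eu \<in> BF_level n r s t F (eidx eu)"
      using out_BF[OF tr sub] by blast
    have "W i \<in> Vset n r s - {T}" using iN by (simp add: Vset_simps)
    then obtain ew where ew: "ew \<in> B" "src ew = W i" "ew \<in> BF_level n r s t F (eidx ew)"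
      using out_BF[OF tr sub] by blast
    show ?thesis
    proof (cases "b1grp r s i \<subseteq> F")
      case True
      obtain l where "eu = Eu1 i l" using src_U[OF eu(2)] eu(3) ex_U0 less.prems(1) True by fastforce
      then have yu: "yB n r s B (U i) = yB n r s B (Bv i 1)"
        using yB_step[OF tr rs eu(1)] eu(2) by simp
      obtain j l where ewj: "ew = Ew i j l" using src_W[OF ew(2)] ew(3) ex_W0 less.prems(1) True by fastforce
      then have ja: "a1grp s i j \<subseteq> F" "j \<in> {1..r}" using ex_W ew(3) less.prems(1) by auto
      have yw: "yB n r s B (W i) = yB n r s B (A i j 1)"
        using yB_step[OF tr rs ew(1)] ew(2) ewj by simp
      have "yB n r s B (A i j 1) = yB n r s B (Bv i 1)"
        using chainA[OF tr sub rs iN(1) _ True ja(2), of 1] less.prems(1) a1_all[OF ja(1)] rs by auto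
      then show ?thesis using yu yw iN by simp
    next
      case False
      obtain l where "eu = Eu0 i l" using src_U[OF eu(2)] eu(3) ex_U1 less.prems(1) False by fastforce
      then have yu: "yB n r s B (U i) = 2^(2*i) + yB n r s B (uN n (Suc i))"
        using yB_step[OF tr rs eu(1)] eu(2) by simp
      obtain l where "ew = Ew0 i l" using src_W[OF ew(2)] ew(3) ex_W less.prems(1) False by fastforce
      then have yw: "yB n r s B (W i) = 2^(2*i) + yB n r s B (wN n (Suc i))"
        using yB_step[OF tr rs ew(1)] ew(2) by simp
      then show ?thesis using yu IH iN by simp
    qed
  qed
qed



lemma eps_nn: "0 \<le> eps r s" unfolding eps_def by simp

lemma rs_pos: "(1::nat) \<le> r*s \<Longrightarrow> 1 \<le> r \<and> 1 \<le> s"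
  by (cases r; cases s) auto

theorem mainTheorem6:
  fixes n r s t :: nat and F :: "edge set"
  assumes "functional n r s t F"
  shows "(\<forall>i j B. i \<in> {1..n} \<and> j \<in> {1..r*s} \<and> Eb1 i j \<notin> F
             \<and> (\<forall>j'. j < j' \<and> j' \<le> r*s \<longrightarrow> Eb1 i j' \<in> F)
             \<and> i \<ge> reset n r s F \<and> is_tree n r s t B \<and> B \<subseteq> BF n r s t F
             \<longrightarrow> improving n r s t B (Eb1 i j))
       \<and> (\<forall>i j k B. i \<in> {1..n} \<and> j \<in> {1..r} \<and> k \<in> {1..s} \<and> Ea1 i j k \<notin> F
             \<and> (\<forall>k'. k < k' \<and> k' \<le> s \<longrightarrow> Ea1 i j k' \<in> F)
             \<and> i \<ge> reset n r s F \<and> b1grp r s i \<subseteq> F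
             \<and> is_tree n r s t B \<and> B \<subseteq> BF n r s t F
             \<longrightarrow> improving n r s t B (Ea1 i j k))"
proof (intro conjI allI impI; elim conjE)
  fix i j B
  assume i: "i \<in> {1..n}" and j: "j \<in> {1..r*s}" and nF: "Eb1 i j \<notin> F"
    and later: "\<forall>j'. j < j' \<and> j' \<le> r*s \<longrightarrow> Eb1 i j' \<in> F"
    and ri: "reset n r s F \<le> i" and tr: "is_tree n r s t B" and sub: "B \<subseteq> BF n r s t F"
  have "1 \<le> r*s" using j unfolding atLeastAtMost_iff by linarith
  then have rs: "1 \<le> r" "1 \<le> s" using rs_pos by blast+
  have rlt: "reset n r s F < i"
  proof (rule ccontr)
    assume "\<not> reset n r s F < i"
    then have "reset n r s F = i" using ri by simp
    then have "b1grp r s i \<subseteq> F" using reset_prop[of n r s F] i by auto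
    then show False using nF j unfolding b1grp_def by auto
  qed
  have "Bv i j \<in> Vset n r s - {T}" using i j by (simp add: Vset_simps)
  then obtain e where e: "e \<in> B" "src e = Bv i j" "e \<in> F"
    using out_BF[OF tr sub] by blast
  then obtain l where el: "e = Eb0 i j l" using src_Bv[OF e(2)] nF by auto
  have y1: "yB n r s B (Bv i j) = cost r s (Eb0 i j l) + yB n r s B (uN n (Suc i))"
    using yB_step[OF tr rs e(1)] e(2) el by simp
  have y2: "yB n r s B (tgt n r s (Eb1 i j)) = yB n r s B (wN n (Suc i))"
  proof (cases "j < r*s")
    case True
    have "yB n r s B (Bv i (Suc j)) = yB n r s B (wN n (Suc i))"
      using chainB[OF tr sub rs i ri, of "Suc j"] True later by auto
    then show ?thesis using True by simp
  next
    case False then show ?thesis by simp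
  qed
  have y3: "yB n r s B (wN n (Suc i)) = yB n r s B (uN n (Suc i))"
    using diffWU[OF tr sub rs, of "Suc i"] rlt i by auto
  have c: "0 < cost r s (Eb0 i j l)" using eps_nn[of r s] j
    by (simp add: add_nonneg_nonneg add_pos_nonneg)
  show "improving n r s t B (Eb1 i j)"
    unfolding improving_def using i j y1 y2 y3 c by (simp add: Eset_simps)
next
  fix i j k B
  assume i: "i \<in> {1..n}" and j: "j \<in> {1..r}" and k: "k \<in> {1..s}" and nF: "Ea1 i j k \<notin> F"
    and later: "\<forall>k'. k < k' \<and> k' \<le> s \<longrightarrow> Ea1 i j k' \<in> F"
    and ri: "reset n r s F \<le> i" and b1: "b1grp r s i \<subseteq> F"
    and tr: "is_tree n r s t B" and sub: "B \<subseteq> BF n r s t F"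
  have rs: "1 \<le> r" "1 \<le> s" using j k by auto
  have rlt: "reset n r s F < Suc i" using ri by simp
  have "A i j k \<in> Vset n r s - {T}" using i j k by (simp add: Vset_simps)
  then obtain e where e: "e \<in> B" "src e = A i j k" "e \<in> F"
    using out_BF[OF tr sub] by blast
  then obtain l where el: "e = Ea0 i j k l" using src_A[OF e(2)] nF by auto
  have y1: "yB n r s B (A i j k) = cost r s (Ea0 i j k l) + yB n r s B (uN n (Suc i))"
    using yB_step[OF tr rs e(1)] e(2) el by simp
  have yb: "yB n r s B (Bv i 1) = yB n r s B (wN n (Suc i))"
    using chainB[OF tr sub rs i ri, of 1] b1_all[OF b1] rs by auto
  have y2: "yB n r s B (tgt n r s (Ea1 i j k)) = yB n r s B (wN n (Suc i))"
  proof (cases "k < s")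
    case True
    have "yB n r s B (A i j (Suc k)) = yB n r s B (Bv i 1)"
      using chainA[OF tr sub rs i ri b1 j, of "Suc k"] True later by auto
    then show ?thesis using True yb by simp
  next
    case False then show ?thesis using yb by simp
  qed
  have y3: "yB n r s B (wN n (Suc i)) = yB n r s B (uN n (Suc i))"
    using diffWU[OF tr sub rs, of "Suc i"] rlt i by auto
  have c: "0 < cost r s (Ea0 i j k l)" using eps_nn[of r s] k
    by (simp add: add_pos_nonneg)
  show "improving n r s t B (Ea1 i j k)"
    unfolding improving_def using i j k y1 y2 y3 c by (simp add: Eset_simps)
qed

end
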